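(* Let $F:\mathbb R^n\to\mathbb R^n$ be monotone with $\|F(z)-F(z')\|\le\ell\|z-z'\|$ and $\|\partial F(z)-\partial F(z')\|_\sigma\le\Lambda\|z-z'\|$. Let $\eta>0$, $z^{(-1)},z^{(0)}\in\mathbb R^n$, $z^{(t+1)}=z^{(t)}-2\eta F(z^{(t)})+\eta F(z^{(t-1)})$, $w^{(t)}:=z^{(t)}+\eta F(z^{(t-1)})$, $A^{(t)}:=\int_0^1\partial F(w^{(t)}-(1-\alpha)\eta F(z^{(t)}))d\alpha$, $B^{(t)}:=\int_0^1\partial F(w^{(t)}-(1-\alpha)\eta F(z^{(t-1)}))d\alpha$. Fix an integer $T\ge1$, set $C^{(T)}:=0$ and recursively, for $t=T,T-1,\dots,0$, $C^{(t-1)}:=(I-\eta A^{(t)}+C^{(t)})^{-1}\,\eta(\eta A^{(t)}-C^{(t)})B^{(t)}$. Let $\delta^{(t)}:=\max\{\|F(z^{(t)})\|,\|F(z^{(t-1)})\|\}$. Suppose there is $L_0>0$ such that for all $0\le t\le T$, $\max\{\eta\|A^{(t)}\|_\sigma,\eta\|B^{(t)}\|_\sigma\}\le L_0\le\sqrt{1/200}$, and $\eta\ell\le2/3$. Then: 1. $\|C^{(t)}\|_\sigma\le 2L_0^2$ for each $t\in\{1,\dots,T\}$. 2. The matrices $C^{(t)}$ are well defined, i.e. $I-\eta A^{(t)}+C^{(t)}$ is invertible for each $t\in\{1,\dots,T\}$, and its inverse has spectral norm at most $\sqrt2$. 3. $\|\eta A^{(t)}-C^{(t)}\|_\sigma\le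 2L_0$ and $\|I-\eta A^{(t)}+C^{(t)}\|_\sigma\le1+2L_0$ for each $t\in\{1,\dots,T\}$. 4. For all $t<T$, $(I-\eta A^{(t+1)}+C^{(t+1)})^{-1}(\eta A^{(t+1)}-C^{(t+1)})(\eta A^{(t+1)}-C^{(t+1)})^\top(I-\eta A^{(t+1)}+C^{(t+1)})^{-\top}\preceq 3\big((\eta A^{(t+1)})(\eta A^{(t+1)})^\top+C^{(t+1)}(C^{(t+1)})^\top\big)$. 5. For all $t<T$, $C^{(t)}(C^{(t)})^\top\preceq J_1\,(\eta A^{(t)})(\eta A^{(t)})^\top+J_2(\delta^{(t)})^2 I$, where $J_1=8L_0^2$ and $J_2=30L_0^2\eta^2(\eta\Lambda)^2$.
   Context: $F$ monotone means $\langle F(z')-F(z),z'-z\rangle\ge0$ for all $z,z'$. $\partial F$ is the Jacobian; $\|\cdot\|_\sigma$ the spectral norm; $M^{-\top}:=(M^{-1})^\top$; $S\preceq T$ means $T-S$ is positive semidefinite. *)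

theory Defs
  imports "HOL-Analysis.Analysis"
begin

definition spec_norm :: "real^'n^'n \<Rightarrow> real" where
  "spec_norm M = onorm (\<lambda>x. M *v x)"

definition psd :: "real^'n^'n \<Rightarrow> bool" where
  "psd M \<longleftrightarrow> (\<forall>x. 0 \<le> x \<bullet> (M *v x))"

definition loewner_le :: "real^'n^'n \<Rightarrow> real^'n^'n \<Rightarrow> bool" where
  "loewner_le S T \<longleftrightarrow> psd (T - S)"

end

theory Submission
  imports Defs
begin


lemma sn_vec: "norm (M *v x) \<le> spec_norm M * norm x"
  unfolding spec_norm_def by (rule onorm) simp

lemma sn_le: fixes M :: "real^'n^'n" assumes "\<And>x. norm (M *v x) \<le> b * norm x" shows "spec_norm M \<le> b"
  unfolding spec_norm_def by (rule onorm_le) (use assms in auto)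

lemma sn_nonneg: "0 \<le> spec_norm M"
  unfolding spec_norm_def by (rule onorm_pos_le) simp

lemma sn_mul: fixes M N :: "real^'n^'n" shows "spec_norm (M ** N) \<le> spec_norm M * spec_norm N"
proof (rule sn_le)
  fix x :: "real^'n"
  have "norm ((M ** N) *v x) = norm (M *v (N *v x))" by (simp add: matrix_vector_mul_assoc)
  also have "\<dots> \<le> spec_norm M * norm (N *v x)" by (rule sn_vec)
  also have "\<dots> \<le> spec_norm M * (spec_norm N * norm x)" by (rule mult_left_mono[OF sn_vec sn_nonneg])
  finally show "norm ((M ** N) *v x) \<le> spec_norm M * spec_norm N * norm x" by (simp add: mult.assoc)
qed

lemma sn_add: fixes M N :: "real^'n^'n" shows "spec_norm (M + N) \<le> spec_norm M + spec_norm N"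
proof (rule sn_le)
  fix x :: "real^'n"
  have "norm ((M + N) *v x) \<le> norm (M *v x) + norm (N *v x)" by (simp add: matrix_vector_mult_add_rdistrib norm_triangle_ineq)
  also have "\<dots> \<le> spec_norm M * norm x + spec_norm N * norm x" by (intro add_mono sn_vec)
  finally show "norm ((M + N) *v x) \<le> (spec_norm M + spec_norm N) * norm x" by (simp add: algebra_simps)
qed

lemma sn_diff: fixes M N :: "real^'n^'n" shows "spec_norm (M - N) \<le> spec_norm M + spec_norm N"
proof (rule sn_le)
  fix x :: "real^'n"
  have "norm ((M - N) *v x) \<le> norm (M *v x) + norm (N *v x)" by (simp add: matrix_vector_mult_diff_rdistrib norm_triangle_ineq4)
  also have "\<dots> \<le> spec_norm M * norm x + spec_norm N * norm x" by (intro add_mono sn_vec)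
  finally show "norm ((M - N) *v x) \<le> (spec_norm M + spec_norm N) * norm x" by (simp add: algebra_simps)
qed

lemma sn_scale: fixes M :: "real^'n^'n" shows "spec_norm (c *\<^sub>R M) = \<bar>c\<bar> * spec_norm M"
proof -
  have "(*v) (c *\<^sub>R M) = (\<lambda>x. c *\<^sub>R (M *v x))" by (rule ext) (simp add: scaleR_matrix_vector_assoc)
  then show ?thesis unfolding spec_norm_def using onorm_scaleR[of "(*v) M" c] by simp
qed

lemma sn_id: "spec_norm (mat 1 :: real^'n^'n) \<le> 1"
  by (rule sn_le) simp

lemma sn_zero: "spec_norm (0 :: real^'n^'n) = 0"
  using sn_nonneg[of "0::real^'n^'n"] sn_le[of "0::real^'n^'n" 0] by simp

lemma inner_mv: fixes M :: "real^'n^'n" shows "x \<bullet> (M *v y) = (transpose M *v x) \<bullet> y"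
  by (simp add: dot_lmul_matrix)

lemma sn_tvec: fixes M :: "real^'n^'n" shows "norm (transpose M *v x) \<le> spec_norm M * norm x"
proof -
  let ?v = "transpose M *v x"
  have "(norm ?v)^2 = ?v \<bullet> ?v" by (simp add: power2_norm_eq_inner)
  also have "\<dots> = x \<bullet> (M *v ?v)" by (simp add: inner_mv)
  also have "\<dots> \<le> norm x * norm (M *v ?v)" by (rule Cauchy_Schwarz_ineq2[THEN order_trans[OF abs_ge_self]])
  also have "\<dots> \<le> norm x * (spec_norm M * norm ?v)" by (rule mult_left_mono[OF sn_vec]) simp
  finally have "norm ?v * norm ?v \<le> (spec_norm M * norm x) * norm ?v" by (simp add: power2_eq_square algebra_simps)
  then show ?thesis
    by (cases "norm ?v = 0") (auto simp: sn_nonneg)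
qed

lemma quad_MMt: fixes M :: "real^'n^'n" shows "x \<bullet> ((M ** transpose M) *v x) = (norm (transpose M *v x))^2"
  by (simp add: matrix_vector_mul_assoc[symmetric] inner_mv power2_norm_eq_inner)

lemma loewner_iff: "loewner_le S T \<longleftrightarrow> (\<forall>x. x \<bullet> (S *v x) \<le> x \<bullet> (T *v x))"
  unfolding loewner_le_def psd_def by (simp add: matrix_vector_mult_diff_rdistrib inner_diff_right)



lemma mm_diff_r: fixes A B C :: "real^'n^'n" shows "(A - B) ** C = A ** C - B ** C"
  by (simp add: matrix_matrix_mult_def sum_subtractf algebra_simps vec_eq_iff)
lemma mm_diff_l: fixes A B C :: "real^'n^'n" shows "A ** (B - C) = A ** B - A ** C"
  by (simp add: matrix_matrix_mult_def sum_subtractf algebra_simps vec_eq_iff)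
lemma mm_add_r: fixes A B C :: "real^'n^'n" shows "(A + B) ** C = A ** C + B ** C"
  by (simp add: matrix_matrix_mult_def sum.distrib algebra_simps vec_eq_iff)
lemma transpose_diff: fixes A B :: "real^'n^'n" shows "transpose (A - B) = transpose A - transpose B"
  by (simp add: transpose_def vec_eq_iff)
lemma transpose_add: fixes A B :: "real^'n^'n" shows "transpose (A + B) = transpose A + transpose B"
  by (simp add: transpose_def vec_eq_iff)

lemma inv_props:
  fixes X :: "real^'n^'n"
  assumes X: "spec_norm X \<le> k" and k: "k < 1"
  shows "invertible (mat 1 - X)"
    and "spec_norm (matrix_inv (mat 1 - X)) \<le> 1 / (1 - k)"
    and "matrix_inv (mat 1 - X) ** X = X ** matrix_inv (mat 1 - X)"
    and "(mat 1 - X) ** matrix_inv (mat 1 - X) = mat 1"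
    and "matrix_inv (mat 1 - X) ** (mat 1 - X) = mat 1"
proof -
  have low: "(1 - k) * norm v \<le> norm ((mat 1 - X) *v v)" for v
  proof -
    have "norm v \<le> norm ((mat 1 - X) *v v) + norm (X *v v)"
      using norm_triangle_ineq[of "(mat 1 - X) *v v" "X *v v"]
      by (simp add: matrix_vector_mult_diff_rdistrib)
    also have "norm (X *v v) \<le> k * norm v"
      using sn_vec[of X v] mult_right_mono[OF X norm_ge_zero[of v]] by linarith
    finally show ?thesis by (simp add: algebra_simps)
  qed
  have "inj ((*v) (mat 1 - X))"
  proof (rule injI)
    fix a b assume "(mat 1 - X) *v a = (mat 1 - X) *v b"
    then have "(mat 1 - X) *v (a - b) = 0" by (simp add: matrix_vector_mult_diff_distrib)
    then have "(1 - k) * norm (a - b) \<le> 0" using low[of "a - b"] by simp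
    then have "norm (a - b) \<le> 0" using k by (simp add: mult_le_0_iff)
    then show "a = b" by simp
  qed
  then show inv: "invertible (mat 1 - X)"
    using matrix_left_invertible_injective invertible_left_inverse by blast
  let ?P = "matrix_inv (mat 1 - X)"
  have PP: "(mat 1 - X) ** ?P = mat 1 \<and> ?P ** (mat 1 - X) = mat 1"
    using inv unfolding invertible_def matrix_inv_def by (rule someI_ex)
  then show r: "(mat 1 - X) ** ?P = mat 1" and l: "?P ** (mat 1 - X) = mat 1" by auto
  show "spec_norm ?P \<le> 1 / (1 - k)"
  proof (rule sn_le)
    fix y :: "real^'n"
    have "(mat 1 - X) *v (?P *v y) = y" using r by (simp add: matrix_vector_mul_assoc)
    then have "(1 - k) * norm (?P *v y) \<le> norm y" using low[of "?P *v y"] by simp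
    then show "norm (?P *v y) \<le> 1 / (1 - k) * norm y" using k by (simp add: field_simps)
  qed
  have c: "(mat 1 - X) ** X = X ** (mat 1 - X)" by (simp add: mm_diff_r mm_diff_l)
  have "?P ** X = ?P ** X ** ((mat 1 - X) ** ?P)" using r by simp
  also have "\<dots> = ?P ** (X ** (mat 1 - X)) ** ?P" by (simp add: matrix_mul_assoc)
  also have "\<dots> = ?P ** ((mat 1 - X) ** X) ** ?P" by (simp only: c)
  also have "\<dots> = ?P ** (mat 1 - X) ** X ** ?P" by (simp add: matrix_mul_assoc)
  also have "\<dots> = X ** ?P" using l by simp
  finally show "?P ** X = X ** ?P" .
qed



lemma row_eq: fixes M :: "real^'n^'n" shows "M $ i = transpose M *v axis i 1"
  by (simp add: vec_eq_iff vector_matrix_mult_def axis_def if_distrib[where f="\<lambda>c. c * _"] cong: if_cong)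

lemma norm_le_sn: fixes M :: "real^'n^'n" shows "norm M \<le> real CARD('n) * spec_norm M"
proof -
  have "norm M \<le> (\<Sum>i\<in>UNIV. norm (M $ i))" by (simp add: norm_vec_def L2_set_le_sum)
  also have "\<dots> \<le> (\<Sum>i\<in>(UNIV::'n set). spec_norm M)"
  proof (rule sum_mono)
    fix i :: 'n
    have "norm (M $ i) \<le> spec_norm M * norm (axis i 1 :: real^'n)" unfolding row_eq by (rule sn_tvec)
    then show "norm (M $ i) \<le> spec_norm M" by simp
  qed
  finally show ?thesis by simp
qed

lemma DF_cont:
  fixes DF :: "real^'n \<Rightarrow> real^'n^'n"
  assumes lipD: "\<forall>u v. spec_norm (DF u - DF v) \<le> Lam * norm (u - v)" and L: "Lam \<ge> 0"
  shows "continuous_on S DF"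
proof (rule lipschitz_on_continuous_on[of "real CARD('n) * Lam"], rule lipschitz_onI)
  fix x y assume "x \<in> S" "y \<in> S"
  have "dist (DF x) (DF y) \<le> real CARD('n) * spec_norm (DF x - DF y)" by (simp add: dist_norm norm_le_sn)
  also have "\<dots> \<le> real CARD('n) * (Lam * norm (x - y))" using lipD by (intro mult_left_mono) auto
  finally show "dist (DF x) (DF y) \<le> real CARD('n) * Lam * dist x y" by (simp add: dist_norm mult.assoc)
qed (use L in simp)

lemma bl_mv: "bounded_linear (\<lambda>M::real^'n^'n. M *v x)"
proof -
  have "linear (\<lambda>M::real^'n^'n. M *v x)"
    by (rule linearI) (simp_all add: matrix_vector_mult_add_rdistrib scaleR_matrix_vector_assoc)
  then show ?thesis by (simp add: linear_conv_bounded_linear)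
qed

lemma int_bound:
  fixes DF :: "real^'n \<Rightarrow> real^'n^'n" and a0 a1 :: "real \<Rightarrow> real^'n"
  assumes lipD: "\<forall>u v. spec_norm (DF u - DF v) \<le> Lam * norm (u - v)" and L: "Lam \<ge> 0"
    and c0: "continuous_on {0..1} a0" and c1: "continuous_on {0..1} a1"
    and bd: "\<forall>\<alpha>\<in>{0..1}. norm (a1 \<alpha> - a0 \<alpha>) \<le> D"
  shows "spec_norm (integral {0..1} (\<lambda>\<alpha>. DF (a1 \<alpha>)) - integral {0..1} (\<lambda>\<alpha>. DF (a0 \<alpha>))) \<le> Lam * D"
proof -
  have cD: "continuous_on UNIV DF" by (rule DF_cont[OF lipD L])
  have g0: "continuous_on {0..1} (\<lambda>\<alpha>. DF (a0 \<alpha>))" by (rule continuous_on_compose2[OF cD c0]) auto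
  have g1: "continuous_on {0..1} (\<lambda>\<alpha>. DF (a1 \<alpha>))" by (rule continuous_on_compose2[OF cD c1]) auto
  let ?g = "\<lambda>\<alpha>. DF (a1 \<alpha>) - DF (a0 \<alpha>)"
  have cg: "continuous_on {0..1} ?g" using g0 g1 by (intro continuous_on_diff)
  have ig: "?g integrable_on {0..1}" by (rule integrable_continuous_real[OF cg])
  have eq: "integral {0..1} (\<lambda>\<alpha>. DF (a1 \<alpha>)) - integral {0..1} (\<lambda>\<alpha>. DF (a0 \<alpha>)) = integral {0..1} ?g"
    by (rule integral_diff[symmetric]) (use g0 g1 integrable_continuous_real in auto)
  show ?thesis unfolding eq
  proof (rule sn_le)
    fix x :: "real^'n"
    have "(integral {0..1} ?g) *v x = integral {0..1} ((\<lambda>M. M *v x) \<circ> ?g)"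
      by (rule integral_linear[OF ig bl_mv, symmetric])
    also have "norm \<dots> \<le> Lam * D * norm x * (1 - 0)"
    proof (rule integral_bound)
      show "continuous_on {0..1} ((\<lambda>M. M *v x) \<circ> ?g)"
        by (rule continuous_on_compose[OF cg]) (rule linear_continuous_on[OF bl_mv])
      fix t :: real assume t: "t \<in> {0..1}"
      have "norm (?g t *v x) \<le> spec_norm (?g t) * norm x" by (rule sn_vec)
      also have "\<dots> \<le> (Lam * D) * norm x"
      proof (rule mult_right_mono)
        have "spec_norm (?g t) \<le> Lam * norm (a1 t - a0 t)" using lipD by auto
        also have "\<dots> \<le> Lam * D" using bd t L by (intro mult_left_mono) auto
        finally show "spec_norm (?g t) \<le> Lam * D" .
      qed simp
      finally show "norm (((\<lambda>M. M *v x) \<circ> ?g) t) \<le> Lam * D * norm x" by simp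
    qed simp
    finally show "norm (integral {0..1} ?g *v x) \<le> Lam * D * norm x" by simp
  qed
qed



lemma down_induct:
  fixes P :: "int \<Rightarrow> bool"
  assumes base: "P T" and step: "\<And>u. lo \<le> u \<Longrightarrow> u < T \<Longrightarrow> P (u + 1) \<Longrightarrow> P u"
    and "lo \<le> t" "t \<le> T"
  shows "P t"
proof -
  have "\<forall>t. lo \<le> t \<and> t \<le> T \<and> nat (T - t) = k \<longrightarrow> P t" for k
  proof (induction k)
    case 0 then show ?case using base by auto
  next
    case (Suc k)
    show ?case
    proof (intro allI impI)
      fix t assume h: "lo \<le> t \<and> t \<le> T \<and> nat (T - t) = Suc k"
      then have "t + 1 \<le> T" "nat (T - (t + 1)) = k" "lo \<le> t + 1" by auto
      then have "P (t + 1)" using Suc.IH by blast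
      then show "P t" using step h by auto
    qed
  qed
  then show ?thesis using assms by blast
qed

lemma step_facts:
  fixes Y C :: "real^'n^'n"
  assumes sY: "spec_norm Y \<le> L0" and sC: "spec_norm C \<le> 2 * L0\<^sup>2" and L: "0 < L0" "L0 \<le> 1/14"
  shows "spec_norm (Y - C) \<le> L0 + 2 * L0\<^sup>2"
    and "invertible (mat 1 - (Y - C))"
    and "spec_norm (matrix_inv (mat 1 - (Y - C))) \<le> 12/11"
    and "matrix_inv (mat 1 - (Y - C)) ** (Y - C) = (Y - C) ** matrix_inv (mat 1 - (Y - C))"
proof -
  show X: "spec_norm (Y - C) \<le> L0 + 2 * L0\<^sup>2" using sn_diff[of Y C] sY sC by linarith
  have h: "L0 * L0 \<le> L0 * (1/14)" using L by (intro mult_left_mono) auto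
  have k: "L0 + 2 * L0\<^sup>2 \<le> 1/12" unfolding power2_eq_square using h L by linarith
  note ip = inv_props[OF X]
  show "invertible (mat 1 - (Y - C))" using ip k by simp
  show "matrix_inv (mat 1 - (Y - C)) ** (Y - C) = (Y - C) ** matrix_inv (mat 1 - (Y - C))" using ip k by simp
  have "1 / (1 - (L0 + 2 * L0\<^sup>2)) \<le> 12/11" using k by (simp add: field_simps)
  then show "spec_norm (matrix_inv (mat 1 - (Y - C))) \<le> 12/11" using ip(2) k by linarith
qed

lemma sq1: fixes a b :: real shows "(12/11*(a+b))\<^sup>2 \<le> 3*(a\<^sup>2+b\<^sup>2)"
proof -
  have e: "3*(a\<^sup>2+b\<^sup>2) - (12/11*(a+b))\<^sup>2 = 144/121 * (a-b)\<^sup>2 + 75/121 * (a\<^sup>2 + b\<^sup>2)"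
    by (simp add: power2_eq_square field_simps)
  have nn: "0 \<le> 144/121 * (a-b)\<^sup>2 + 75/121 * (a\<^sup>2 + b\<^sup>2)" by simp
  then show ?thesis using e nn by linarith
qed
lemma sq2: fixes p q :: real shows "(6/5*p + 24/5*q)\<^sup>2 \<le> 8*p\<^sup>2 + 30*q\<^sup>2"
proof -
  have e: "8*p\<^sup>2 + 30*q\<^sup>2 - (6/5*p + 24/5*q)\<^sup>2 = 144/25 * (p-q)\<^sup>2 + 4/5 * p\<^sup>2 + 6/5 * q\<^sup>2"
    by (simp add: power2_eq_square field_simps)
  have nn: "0 \<le> 144/25 * (p-q)\<^sup>2 + 4/5 * p\<^sup>2 + 6/5 * q\<^sup>2" by simp
  then show ?thesis using e nn by linarith
qed

theorem lemma15:
  fixes F :: "real^'n \<Rightarrow> real^'n"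
    and DF :: "real^'n \<Rightarrow> real^'n^'n"
    and ell Lam \<eta> L0 :: real
    and z w :: "int \<Rightarrow> real^'n"
    and A B C :: "int \<Rightarrow> real^'n^'n"
    and \<delta> :: "int \<Rightarrow> real"
    and T :: int
  assumes mono: "\<forall>u v. 0 \<le> (F v - F u) \<bullet> (v - u)"
    and jac: "\<forall>u. (F has_derivative (\<lambda>h. DF u *v h)) (at u)"
    and lip: "\<forall>u v. norm (F u - F v) \<le> ell * norm (u - v)"
    and jac_lip: "\<forall>u v. spec_norm (DF u - DF v) \<le> Lam * norm (u - v)"
    and eta: "\<eta> > 0"
    and z_rec: "\<forall>t\<ge>0. z (t + 1) = z t - (2 * \<eta>) *\<^sub>R F (z t) + \<eta> *\<^sub>R F (z (t - 1))"
    and w_def: "\<forall>t\<ge>0. w t = z t + \<eta> *\<^sub>R F (z (t - 1))"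
    and A_def: "\<forall>t\<ge>0. A t = integral {0..1} (\<lambda>\<alpha>. DF (w t - ((1 - \<alpha>) * \<eta>) *\<^sub>R F (z t)))"
    and B_def: "\<forall>t\<ge>0. B t = integral {0..1} (\<lambda>\<alpha>. DF (w t - ((1 - \<alpha>) * \<eta>) *\<^sub>R F (z (t - 1))))"
    and T1: "T \<ge> 1"
    and C_T: "C T = 0"
    and C_rec: "\<forall>t. 0 \<le> t \<and> t \<le> T \<longrightarrow>
        C (t - 1) = matrix_inv (mat 1 - \<eta> *\<^sub>R A t + C t) ** ((\<eta> *\<^sub>R (\<eta> *\<^sub>R A t - C t)) ** B t)"
    and \<delta>_def: "\<forall>t\<ge>0. \<delta> t = max (norm (F (z t))) (norm (F (z (t - 1))))"
    and L0_pos: "L0 > 0"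
    and L0_bd: "\<forall>t. 0 \<le> t \<and> t \<le> T \<longrightarrow> max (\<eta> * spec_norm (A t)) (\<eta> * spec_norm (B t)) \<le> L0"
    and L0_small: "L0 \<le> sqrt (1 / 200)"
    and eta_ell: "\<eta> * ell \<le> 2 / 3"
  shows "(\<forall>t. 1 \<le> t \<and> t \<le> T \<longrightarrow> spec_norm (C t) \<le> 2 * L0\<^sup>2)
    \<and> (\<forall>t. 1 \<le> t \<and> t \<le> T \<longrightarrow> invertible (mat 1 - \<eta> *\<^sub>R A t + C t)
           \<and> spec_norm (matrix_inv (mat 1 - \<eta> *\<^sub>R A t + C t)) \<le> sqrt 2)
    \<and> (\<forall>t. 1 \<le> t \<and> t \<le> T \<longrightarrow> spec_norm (\<eta> *\<^sub>R A t - C t) \<le> 2 * L0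
           \<and> spec_norm (mat 1 - \<eta> *\<^sub>R A t + C t) \<le> 1 + 2 * L0)
    \<and> (\<forall>t. 0 \<le> t \<and> t < T \<longrightarrow>
          loewner_le
            (matrix_inv (mat 1 - \<eta> *\<^sub>R A (t + 1) + C (t + 1)) ** (\<eta> *\<^sub>R A (t + 1) - C (t + 1))
              ** transpose (\<eta> *\<^sub>R A (t + 1) - C (t + 1))
              ** transpose (matrix_inv (mat 1 - \<eta> *\<^sub>R A (t + 1) + C (t + 1))))
            (3 *\<^sub>R ((\<eta> *\<^sub>R A (t + 1)) ** transpose (\<eta> *\<^sub>R A (t + 1))
                    + C (t + 1) ** transpose (C (t + 1)))))
    \<and> (\<forall>t. 0 \<le> t \<and> t < T \<longrightarrow>
          loewner_le (C t ** transpose (C t))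
            ((8 * L0\<^sup>2) *\<^sub>R ((\<eta> *\<^sub>R A t) ** transpose (\<eta> *\<^sub>R A t))
             + (30 * L0\<^sup>2 * \<eta>\<^sup>2 * (\<eta> * Lam)\<^sup>2 * (\<delta> t)\<^sup>2) *\<^sub>R mat 1))"
proof -
  define Y where "Y = (\<lambda>t. \<eta> *\<^sub>R A t)"
  define Bs where "Bs = (\<lambda>t. \<eta> *\<^sub>R B t)"
  define s where "s = (\<lambda>t. \<eta>\<^sup>2 * Lam * \<delta> t)"
  obtain i0 :: 'n where True by blast
  have nax: "norm (axis i0 1 - 0 :: real^'n) = 1" by simp
  have Lam0: "0 \<le> Lam"
    using jac_lip[rule_format, of "axis i0 1" 0] sn_nonneg[of "DF (axis i0 1) - DF 0"] nax by simp
  have ell0: "0 \<le> ell"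
    using lip[rule_format, of "axis i0 1" 0] nax by simp (meson norm_ge_zero order_trans)
  have "sqrt (1/200) \<le> sqrt ((1/14)\<^sup>2)" by (rule real_sqrt_le_mono) (simp add: power2_eq_square)
  then have L14: "L0 \<le> 1/14" using L0_small by simp
  have L0sq: "L0 * L0 \<le> L0 * (1/14)" using L0_pos L14 by (intro mult_left_mono) auto
  have sY: "spec_norm (Y t) \<le> L0" and sB: "spec_norm (Bs t) \<le> L0" if "0 \<le> t" "t \<le> T" for t
    using L0_bd[rule_format, of t] that eta by (auto simp: Y_def Bs_def sn_scale)
  have d0: "0 \<le> \<delta> t" if "0 \<le> t" for t using \<delta>_def that by (simp add: le_max_iff_disj)
  have s0: "0 \<le> s t" if "0 \<le> t" for t using d0[OF that] Lam0 by (simp add: s_def)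
  have dz: "norm (z (u + 1) - z u) \<le> 3 * \<eta> * \<delta> u" if u: "0 \<le> u" for u
  proof -
    have "z (u + 1) - z u = \<eta> *\<^sub>R F (z (u - 1)) - (2 * \<eta>) *\<^sub>R F (z u)" using z_rec u by simp
    then have "norm (z (u + 1) - z u) \<le> \<eta> * norm (F (z (u - 1))) + 2 * \<eta> * norm (F (z u))"
      using norm_triangle_ineq4[of "\<eta> *\<^sub>R F (z (u - 1))" "(2 * \<eta>) *\<^sub>R F (z u)"] eta by simp
    also have "\<dots> \<le> \<eta> * \<delta> u + 2 * \<eta> * \<delta> u"
      using \<delta>_def u eta by (intro add_mono mult_left_mono) auto
    finally show ?thesis by simp
  qed
  have dF: "norm (F (z (u + 1)) - F (z u)) \<le> 2 * \<delta> u" if u: "0 \<le> u" for u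
  proof -
    have "norm (F (z (u + 1)) - F (z u)) \<le> ell * norm (z (u + 1) - z u)" using lip by simp
    also have "\<dots> \<le> ell * (3 * \<eta> * \<delta> u)" using dz[OF u] ell0 by (rule mult_left_mono)
    also have "\<dots> = (\<eta> * ell) * 3 * \<delta> u" by simp
    also have "\<dots> \<le> (2/3) * 3 * \<delta> u" using eta_ell d0[OF u] by (intro mult_right_mono) auto
    finally show ?thesis by simp
  qed
  have dgrow: "\<delta> (u + 1) \<le> 3 * \<delta> u" if u: "0 \<le> u" for u
  proof -
    have "norm (F (z (u + 1))) \<le> norm (F (z u)) + norm (F (z (u + 1)) - F (z u))"
      by (rule norm_triangle_sub)
    then have "norm (F (z (u + 1))) \<le> 3 * \<delta> u" using dF[OF u] \<delta>_def u by auto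
    then show ?thesis using \<delta>_def u d0[OF u] by auto
  qed
  have sgrow: "s (u + 1) \<le> 3 * s u" if u: "0 \<le> u" for u
  proof -
    have "\<eta>\<^sup>2 * Lam * \<delta> (u + 1) \<le> \<eta>\<^sup>2 * Lam * (3 * \<delta> u)"
      using dgrow[OF u] Lam0 by (intro mult_left_mono) auto
    then show ?thesis by (simp add: s_def)
  qed
  have dY: "spec_norm (Y (u + 1) - Y u) \<le> 3 * s u" if u: "0 \<le> u" for u
  proof -
    define a1 where "a1 = (\<lambda>\<alpha>. w (u + 1) - ((1 - \<alpha>) * \<eta>) *\<^sub>R F (z (u + 1)))"
    define a0 where "a0 = (\<lambda>\<alpha>. w u - ((1 - \<alpha>) * \<eta>) *\<^sub>R F (z u))"
    have A1: "A (u + 1) = integral {0..1} (\<lambda>\<alpha>. DF (a1 \<alpha>))" using A_def u by (simp add: a1_def)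
    have A0: "A u = integral {0..1} (\<lambda>\<alpha>. DF (a0 \<alpha>))" using A_def u by (simp add: a0_def)
    have e1: "w (u + 1) = z (u + 1) + \<eta> *\<^sub>R F (z u)" using w_def u by simp
    have e2: "z (u + 1) = z u - (2 * \<eta>) *\<^sub>R F (z u) + \<eta> *\<^sub>R F (z (u - 1))" using z_rec u by simp
    have e3: "w u = z u + \<eta> *\<^sub>R F (z (u - 1))" using w_def u by simp
    have e4: "(2 * \<eta>) *\<^sub>R F (z u) = \<eta> *\<^sub>R F (z u) + \<eta> *\<^sub>R F (z u)" by (metis mult_2 scaleR_left_distrib)
    have ww: "w (u + 1) - w u = - (\<eta> *\<^sub>R F (z u))"
      unfolding e1 e2 e3 e4 by (simp add: algebra_simps del: scaleR_add_right)
    have bd: "\<forall>\<alpha>\<in>{0..1}. norm (a1 \<alpha> - a0 \<alpha>) \<le> 3 * \<eta> * \<delta> u"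
    proof
      fix \<alpha> :: real assume al: "\<alpha> \<in> {0..1}"
      have "a1 \<alpha> - a0 \<alpha> = - (\<eta> *\<^sub>R F (z u)) - ((1 - \<alpha>) * \<eta>) *\<^sub>R (F (z (u + 1)) - F (z u))"
        using ww by (simp add: a1_def a0_def algebra_simps)
      then have "norm (a1 \<alpha> - a0 \<alpha>) \<le> norm (\<eta> *\<^sub>R F (z u)) + norm (((1 - \<alpha>) * \<eta>) *\<^sub>R (F (z (u + 1)) - F (z u)))"
        using norm_triangle_ineq4[of "- (\<eta> *\<^sub>R F (z u))" "((1 - \<alpha>) * \<eta>) *\<^sub>R (F (z (u + 1)) - F (z u))"]
        by (simp only: norm_minus_cancel)
      also have "\<dots> = \<eta> * norm (F (z u)) + ((1 - \<alpha>) * \<eta>) * norm (F (z (u + 1)) - F (z u))"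
        using eta al by simp
      also have "\<dots> \<le> \<eta> * \<delta> u + (1 * \<eta>) * (2 * \<delta> u)"
        using eta al \<delta>_def u dF[OF u] by (intro add_mono mult_mono mult_left_mono) auto
      finally show "norm (a1 \<alpha> - a0 \<alpha>) \<le> 3 * \<eta> * \<delta> u" by simp
    qed
    have c1: "continuous_on {0..1} a1" unfolding a1_def by (intro continuous_intros)
    have c0: "continuous_on {0..1} a0" unfolding a0_def by (intro continuous_intros)
    have "spec_norm (A (u + 1) - A u) \<le> Lam * (3 * \<eta> * \<delta> u)"
      unfolding A1 A0 by (rule int_bound[OF jac_lip Lam0 c0 c1 bd])
    moreover have "Y (u + 1) - Y u = \<eta> *\<^sub>R (A (u + 1) - A u)" by (simp add: Y_def scaleR_diff_right)
    ultimately have "spec_norm (Y (u + 1) - Y u) \<le> \<eta> * (Lam * (3 * \<eta> * \<delta> u))"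
      using eta by (simp add: sn_scale)
    moreover have "\<eta> * (Lam * (3 * \<eta> * \<delta> u)) = 3 * s u" by (simp add: s_def power2_eq_square)
    ultimately show ?thesis by simp
  qed
  have Crec: "C u = matrix_inv (mat 1 - (Y (u + 1) - C (u + 1))) ** ((Y (u + 1) - C (u + 1)) ** Bs (u + 1))"
    if "0 \<le> u" "u < T" for u
  proof -
    have "C (u + 1 - 1) = matrix_inv (mat 1 - \<eta> *\<^sub>R A (u + 1) + C (u + 1)) ** ((\<eta> *\<^sub>R (\<eta> *\<^sub>R A (u + 1) - C (u + 1))) ** B (u + 1))"
      using C_rec[rule_format, of "u + 1"] that by simp
    moreover have "mat 1 - \<eta> *\<^sub>R A (u + 1) + C (u + 1) = mat 1 - (Y (u + 1) - C (u + 1))"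
      by (simp add: Y_def algebra_simps)
    moreover have "(\<eta> *\<^sub>R (\<eta> *\<^sub>R A (u + 1) - C (u + 1))) ** B (u + 1) = (Y (u + 1) - C (u + 1)) ** Bs (u + 1)"
      by (simp add: Y_def Bs_def matrix_scalar_ac)
    ultimately show ?thesis by simp
  qed
  have P1: "spec_norm (C t) \<le> 2 * L0\<^sup>2" if "0 \<le> t" "t \<le> T" for t
  proof (rule down_induct[where P = "\<lambda>t. spec_norm (C t) \<le> 2 * L0\<^sup>2" and lo = 0, OF _ _ that])
    show "spec_norm (C T) \<le> 2 * L0\<^sup>2" using C_T by (simp add: sn_zero)
  next
    fix u :: int assume u: "0 \<le> u" "u < T" and IH: "spec_norm (C (u + 1)) \<le> 2 * L0\<^sup>2"
    note sf = step_facts[OF sY[of "u+1"] IH L0_pos L14]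
    let ?P = "matrix_inv (mat 1 - (Y (u + 1) - C (u + 1)))" and ?X = "Y (u + 1) - C (u + 1)"
    have "spec_norm (C u) \<le> spec_norm ?P * spec_norm (?X ** Bs (u + 1))"
      unfolding Crec[OF u] by (rule sn_mul)
    also have "\<dots> \<le> spec_norm ?P * (spec_norm ?X * spec_norm (Bs (u + 1)))"
      by (intro mult_left_mono sn_mul sn_nonneg)
    also have "\<dots> \<le> (12/11) * ((L0 + 2 * L0\<^sup>2) * L0)"
      using sf sB[of "u+1"] u L0_pos by (intro mult_mono sn_nonneg mult_nonneg_nonneg) auto
    also have "\<dots> \<le> 2 * L0\<^sup>2"
    proof -
      have h: "L0 * L0 * L0 \<le> L0 * (1/14) * L0" using L0sq L0_pos by (intro mult_right_mono) auto
      have e: "(12/11) * ((L0 + 2 * L0\<^sup>2) * L0) = 12/11 * (L0 * L0) + 24/11 * (L0 * L0 * L0)"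
        by (simp add: power2_eq_square algebra_simps)
      have "0 \<le> L0 * L0" by simp
      then show ?thesis unfolding e using h unfolding power2_eq_square by linarith
    qed
    finally show "spec_norm (C u) \<le> 2 * L0\<^sup>2" .
  qed
  have eqs: "mat 1 - \<eta> *\<^sub>R A t + C t = mat 1 - (Y t - C t)" "\<eta> *\<^sub>R A t - C t = Y t - C t"
    "\<eta> *\<^sub>R A t = Y t" for t
    by (simp_all add: Y_def algebra_simps)
  have SF: "spec_norm (Y t - C t) \<le> L0 + 2 * L0\<^sup>2 \<and> invertible (mat 1 - (Y t - C t))
    \<and> spec_norm (matrix_inv (mat 1 - (Y t - C t))) \<le> 12/11
    \<and> matrix_inv (mat 1 - (Y t - C t)) ** (Y t - C t) = (Y t - C t) ** matrix_inv (mat 1 - (Y t - C t))"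
    if "0 \<le> t" "t \<le> T" for t
    using step_facts[OF sY[OF that] P1[OF that] L0_pos L14] by blast
  have tnorm_diff: "norm (transpose (M - N) *v x) \<le> norm (transpose M *v x) + norm (transpose N *v x)"
    for M N :: "real^'n^'n" and x
    by (simp only: transpose_diff matrix_vector_mult_diff_rdistrib norm_triangle_ineq4)
  have P5: "\<exists>Q R. C t = Y t ** Q + R \<and> spec_norm Q \<le> 6/5 * L0 \<and> spec_norm R \<le> 24/5 * L0 * s t"
    if "0 \<le> t" "t \<le> T" for t
  proof (rule down_induct[where P = "\<lambda>t. \<exists>Q R. C t = Y t ** Q + R \<and> spec_norm Q \<le> 6/5 * L0 \<and> spec_norm R \<le> 24/5 * L0 * s t" and lo = 0, OF _ _ that])
    show "\<exists>Q R. C T = Y T ** Q + R \<and> spec_norm Q \<le> 6/5 * L0 \<and> spec_norm R \<le> 24/5 * L0 * s T"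
      using C_T s0[of T] T1 L0_pos by (intro exI[of _ 0]) (simp add: sn_zero)
  next
    fix u :: int assume u: "0 \<le> u" "u < T"
      and IH: "\<exists>Q R. C (u + 1) = Y (u + 1) ** Q + R \<and> spec_norm Q \<le> 6/5 * L0 \<and> spec_norm R \<le> 24/5 * L0 * s (u + 1)"
    then obtain Q' R' where CQ: "C (u + 1) = Y (u + 1) ** Q' + R'" and nQ': "spec_norm Q' \<le> 6/5 * L0"
      and nR': "spec_norm R' \<le> 24/5 * L0 * s (u + 1)" by blast
    let ?X = "Y (u + 1) - C (u + 1)"
    let ?P = "matrix_inv (mat 1 - ?X)"
    define W where "W = ?P ** Bs (u + 1)"
    have sf: "spec_norm ?P \<le> 12/11" "?P ** ?X = ?X ** ?P" using SF[of "u + 1"] u by auto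
    have nW: "spec_norm W \<le> 12/11 * L0"
    proof -
      have "spec_norm W \<le> spec_norm ?P * spec_norm (Bs (u + 1))" unfolding W_def by (rule sn_mul)
      also have "\<dots> \<le> 12/11 * L0" using sf sB[of "u + 1"] u by (intro mult_mono sn_nonneg) auto
      finally show ?thesis .
    qed
    define Q where "Q = (mat 1 - Q') ** W"
    define R where "R = ((Y (u + 1) - Y u) ** (mat 1 - Q') - R') ** W"
    have Xeq: "?X = Y u ** (mat 1 - Q') + ((Y (u + 1) - Y u) ** (mat 1 - Q') - R')"
      unfolding CQ by (simp add: mm_diff_r mm_diff_l algebra_simps)
    have "C u = ?P ** (?X ** Bs (u + 1))" using Crec[OF u] .
    also have "\<dots> = (?P ** ?X) ** Bs (u + 1)" by (simp add: matrix_mul_assoc)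
    also have "\<dots> = ?X ** W" unfolding sf(2) W_def by (simp add: matrix_mul_assoc)
    also have "\<dots> = Y u ** Q + R" unfolding Q_def R_def
      by (subst Xeq) (simp add: mm_add_r matrix_mul_assoc)
    finally have Ceq: "C u = Y u ** Q + R" .
    have nIQ: "spec_norm (mat 1 - Q') \<le> 1 + 6/5 * L0" using sn_diff[of "mat 1" Q'] sn_id[where 'n='n] nQ' by linarith
    have nQ: "spec_norm Q \<le> 6/5 * L0"
    proof -
      have "spec_norm Q \<le> spec_norm (mat 1 - Q') * spec_norm W" unfolding Q_def by (rule sn_mul)
      also have "\<dots> \<le> (1 + 6/5 * L0) * (12/11 * L0)" using nIQ nW L0_pos by (intro mult_mono sn_nonneg) auto
      also have "\<dots> = L0 * ((1 + 6/5 * L0) * (12/11))" by simp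
      also have "\<dots> \<le> L0 * (6/5)" using L0_pos L14 by (intro mult_left_mono) auto
      finally show ?thesis by simp
    qed
    have nR: "spec_norm R \<le> 24/5 * L0 * s u"
    proof -
      have a: "spec_norm ((Y (u + 1) - Y u) ** (mat 1 - Q')) \<le> (3 * s u) * (1 + 6/5 * L0)"
        using sn_mul[of "Y (u + 1) - Y u" "mat 1 - Q'"] dY[OF u(1)] nIQ
        by (smt (verit) mult_mono sn_nonneg)
      have b: "spec_norm R' \<le> 24/5 * L0 * (3 * s u)"
      proof -
        have "24/5 * L0 * s (u + 1) \<le> 24/5 * L0 * (3 * s u)"
          using sgrow[OF u(1)] L0_pos by (intro mult_left_mono) auto
        then show ?thesis using nR' by linarith
      qed
      have "spec_norm R \<le> spec_norm ((Y (u + 1) - Y u) ** (mat 1 - Q') - R') * spec_norm W"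
        unfolding R_def by (rule sn_mul)
      also have "\<dots> \<le> ((3 * s u) * (1 + 6/5 * L0) + 24/5 * L0 * (3 * s u)) * (12/11 * L0)"
        using sn_diff[of "(Y (u + 1) - Y u) ** (mat 1 - Q')" R'] a b nW
          sn_nonneg[of "(Y (u + 1) - Y u) ** (mat 1 - Q')"] sn_nonneg[of R']
        by (intro mult_mono sn_nonneg) auto
      also have "\<dots> = (s u * L0) * ((12/11) * (3 + 18 * L0))" by (simp add: algebra_simps)
      also have "\<dots> \<le> (s u * L0) * (24/5)"
        using L14 s0[OF u(1)] L0_pos by (intro mult_left_mono) auto
      also have "\<dots> = 24/5 * L0 * s u" by simp
      finally show ?thesis .
    qed
    show "\<exists>Q R. C u = Y u ** Q + R \<and> spec_norm Q \<le> 6/5 * L0 \<and> spec_norm R \<le> 24/5 * L0 * s u"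
      using Ceq nQ nR by blast
  qed
  have L0sq2: "2 * L0\<^sup>2 \<le> L0" using L0sq L0_pos L14 unfolding power2_eq_square by linarith
  show ?thesis
  proof (intro conjI allI impI)
    fix t assume t: "1 \<le> t \<and> t \<le> T"
    then show "spec_norm (C t) \<le> 2 * L0\<^sup>2" using P1 by auto
  next
    fix t assume t: "1 \<le> t \<and> t \<le> T"
    then have sf: "invertible (mat 1 - (Y t - C t))" "spec_norm (matrix_inv (mat 1 - (Y t - C t))) \<le> 12/11"
      using SF[of t] by auto
    have "12/11 \<le> sqrt 2" by (rule real_le_rsqrt) (simp add: power2_eq_square)
    then show "invertible (mat 1 - \<eta> *\<^sub>R A t + C t)" and "spec_norm (matrix_inv (mat 1 - \<eta> *\<^sub>R A t + C t)) \<le> sqrt 2"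
      unfolding eqs(1) unfolding eqs(2) using sf by auto
  next
    fix t assume t: "1 \<le> t \<and> t \<le> T"
    then have X: "spec_norm (Y t - C t) \<le> L0 + 2 * L0\<^sup>2" using SF[of t] by auto
    have "spec_norm (mat 1 - (Y t - C t)) \<le> 1 + spec_norm (Y t - C t)" using sn_diff[of "mat 1" "Y t - C t"] sn_id[where 'n='n] by linarith
    then show "spec_norm (\<eta> *\<^sub>R A t - C t) \<le> 2 * L0" and "spec_norm (mat 1 - \<eta> *\<^sub>R A t + C t) \<le> 1 + 2 * L0"
      unfolding eqs(1) unfolding eqs(2) using X L0sq2 by auto
  next
    fix t assume t: "0 \<le> t \<and> t < T"
    let ?v = "t + 1"
    let ?X = "Y ?v - C ?v"
    let ?P = "matrix_inv (mat 1 - ?X)"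
    have sf: "spec_norm ?P \<le> 12/11" "?P ** ?X = ?X ** ?P" using SF[of ?v] t by auto
    have "loewner_le (?P ** ?X ** transpose ?X ** transpose ?P) (3 *\<^sub>R (Y ?v ** transpose (Y ?v) + C ?v ** transpose (C ?v)))"
      unfolding loewner_iff
    proof
      fix x :: "real^'n"
      have M: "?P ** ?X ** transpose ?X ** transpose ?P = (?P ** ?X) ** transpose (?P ** ?X)"
        by (simp add: matrix_transpose_mul matrix_mul_assoc)
      have "x \<bullet> ((?P ** ?X ** transpose ?X ** transpose ?P) *v x) = x \<bullet> (((?P ** ?X) ** transpose (?P ** ?X)) *v x)"
        by (simp only: M)
      also have "\<dots> = x \<bullet> (((?X ** ?P) ** transpose (?X ** ?P)) *v x)"
        by (simp only: sf(2))
      also have "\<dots> = (norm (transpose (?X ** ?P) *v x))\<^sup>2" by (rule quad_MMt)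
      also have "\<dots> = (norm (transpose ?P *v (transpose ?X *v x)))\<^sup>2"
        by (simp only: matrix_transpose_mul matrix_vector_mul_assoc)
      also have "\<dots> \<le> (12/11 * (norm (transpose (Y ?v) *v x) + norm (transpose (C ?v) *v x)))\<^sup>2"
      proof (rule power_mono[OF _ norm_ge_zero])
        have "norm (transpose ?P *v (transpose ?X *v x)) \<le> spec_norm ?P * norm (transpose ?X *v x)" by (rule sn_tvec)
        also have "\<dots> \<le> 12/11 * (norm (transpose (Y ?v) *v x) + norm (transpose (C ?v) *v x))"
          using sf(1) tnorm_diff[of "Y ?v" "C ?v" x] by (intro mult_mono) auto
        finally show "norm (transpose ?P *v (transpose ?X *v x)) \<le> 12/11 * (norm (transpose (Y ?v) *v x) + norm (transpose (C ?v) *v x))" .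
      qed
      also have "\<dots> \<le> 3 * ((norm (transpose (Y ?v) *v x))\<^sup>2 + (norm (transpose (C ?v) *v x))\<^sup>2)"
        by (rule sq1)
      also have "\<dots> = x \<bullet> ((3 *\<^sub>R (Y ?v ** transpose (Y ?v) + C ?v ** transpose (C ?v))) *v x)"
        by (simp add: scaleR_matrix_vector_assoc[symmetric] matrix_vector_mult_add_rdistrib inner_add_right quad_MMt)
      finally show "x \<bullet> ((?P ** ?X ** transpose ?X ** transpose ?P) *v x) \<le> x \<bullet> ((3 *\<^sub>R (Y ?v ** transpose (Y ?v) + C ?v ** transpose (C ?v))) *v x)" .
    qed
    then show "loewner_le
            (matrix_inv (mat 1 - \<eta> *\<^sub>R A (t + 1) + C (t + 1)) ** (\<eta> *\<^sub>R A (t + 1) - C (t + 1))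
              ** transpose (\<eta> *\<^sub>R A (t + 1) - C (t + 1))
              ** transpose (matrix_inv (mat 1 - \<eta> *\<^sub>R A (t + 1) + C (t + 1))))
            (3 *\<^sub>R ((\<eta> *\<^sub>R A (t + 1)) ** transpose (\<eta> *\<^sub>R A (t + 1))
                    + C (t + 1) ** transpose (C (t + 1))))"
      unfolding eqs(1) unfolding eqs(2) unfolding eqs(3) .
  next
    fix t assume t: "0 \<le> t \<and> t < T"
    obtain Q R where CQ: "C t = Y t ** Q + R" and nQ: "spec_norm Q \<le> 6/5 * L0"
      and nR: "spec_norm R \<le> 24/5 * L0 * s t" using P5[of t] t by auto
    have "loewner_le (C t ** transpose (C t))
            ((8 * L0\<^sup>2) *\<^sub>R (Y t ** transpose (Y t))
             + (30 * L0\<^sup>2 * \<eta>\<^sup>2 * (\<eta> * Lam)\<^sup>2 * (\<delta> t)\<^sup>2) *\<^sub>R mat 1)"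
      unfolding loewner_iff
    proof
      fix x :: "real^'n"
      define b where "b = norm (transpose (Y t) *v x)"
      define p where "p = L0 * b"
      define q where "q = L0 * s t * norm x"
      have ct: "norm (transpose (C t) *v x) \<le> 6/5 * p + 24/5 * q"
      proof -
        have "transpose (C t) *v x = transpose Q *v (transpose (Y t) *v x) + transpose R *v x"
          unfolding CQ by (simp only: transpose_add matrix_transpose_mul matrix_vector_mult_add_rdistrib matrix_vector_mul_assoc)
        then have "norm (transpose (C t) *v x) \<le> norm (transpose Q *v (transpose (Y t) *v x)) + norm (transpose R *v x)"
          by (simp add: norm_triangle_ineq)
        also have "\<dots> \<le> spec_norm Q * b + spec_norm R * norm x"
          unfolding b_def by (intro add_mono sn_tvec)
        also have "\<dots> \<le> (6/5 * L0) * b + (24/5 * L0 * s t) * norm x"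
          using nQ nR by (intro add_mono mult_right_mono) (auto simp: b_def)
        finally show ?thesis by (simp add: p_def q_def)
      qed
      have "x \<bullet> ((C t ** transpose (C t)) *v x) = (norm (transpose (C t) *v x))\<^sup>2" by (rule quad_MMt)
      also have "\<dots> \<le> (6/5 * p + 24/5 * q)\<^sup>2" by (rule power_mono[OF ct norm_ge_zero])
      also have "\<dots> \<le> 8 * p\<^sup>2 + 30 * q\<^sup>2"
        by (rule sq2)
      also have "\<dots> = x \<bullet> (((8 * L0\<^sup>2) *\<^sub>R (Y t ** transpose (Y t))
             + (30 * L0\<^sup>2 * \<eta>\<^sup>2 * (\<eta> * Lam)\<^sup>2 * (\<delta> t)\<^sup>2) *\<^sub>R mat 1) *v x)"
        by (simp add: scaleR_matrix_vector_assoc[symmetric] matrix_vector_mult_add_rdistrib inner_add_right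
            quad_MMt p_def q_def b_def s_def power2_norm_eq_inner[symmetric] power_mult_distrib algebra_simps)
      finally show "x \<bullet> ((C t ** transpose (C t)) *v x) \<le> x \<bullet> (((8 * L0\<^sup>2) *\<^sub>R (Y t ** transpose (Y t))
             + (30 * L0\<^sup>2 * \<eta>\<^sup>2 * (\<eta> * Lam)\<^sup>2 * (\<delta> t)\<^sup>2) *\<^sub>R mat 1) *v x)" .
    qed
    then show "loewner_le (C t ** transpose (C t))
            ((8 * L0\<^sup>2) *\<^sub>R ((\<eta> *\<^sub>R A t) ** transpose (\<eta> *\<^sub>R A t))
             + (30 * L0\<^sup>2 * \<eta>\<^sup>2 * (\<eta> * Lam)\<^sup>2 * (\<delta> t)\<^sup>2) *\<^sub>R mat 1)"
      unfolding eqs(3) .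
  qed
qed

end
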